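(* Let $(G,\cdot)$ be a loop with identity $e$ and let $(H,\cdot)$ be a non-trivial subloop of $G$. Suppose that $(xs\cdot z)s=x(sz\cdot s)$ for all $x,z\in G$ and all $s\in H$. Then: (i) $xs\cdot s^\rho=x$ for all $x\in G$ and $s\in H$; (ii) $x\cdot ss=xs\cdot s$ for all $x\in G$ and $s\in H$.
   Context: Juxtaposition binds more tightly than $\cdot$; e.g. $xs\cdot z$ means $(xs)z$. For $x$ in a loop with identity $e$, the right inverse $x^\rho$ is the unique element with $xx^\rho=e$. *)

theory Defs
  imports Main
begin

definition loop :: "'a set \<Rightarrow> ('a \<Rightarrow> 'a \<Rightarrow> 'a) \<Rightarrow> 'a \<Rightarrow> bool" where
  "loop G m e \<longleftrightarrow>
     e \<in> G \<and>
     (\<forall>x\<in>G. \<forall>y\<in>G. m x y \<in> G) \<and>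
     (\<forall>x\<in>G. m e x = x \<and> m x e = x) \<and>
     (\<forall>a\<in>G. \<forall>b\<in>G. \<exists>!x. x \<in> G \<and> m a x = b) \<and>
     (\<forall>a\<in>G. \<forall>b\<in>G. \<exists>!y. y \<in> G \<and> m y a = b)"

text \<open>A subloop: a subset of G which is itself a loop under the restricted operation
(with the same identity, which is forced).\<close>
definition subloop :: "'a set \<Rightarrow> 'a set \<Rightarrow> ('a \<Rightarrow> 'a \<Rightarrow> 'a) \<Rightarrow> 'a \<Rightarrow> bool" where
  "subloop H G m e \<longleftrightarrow> H \<subseteq> G \<and> loop H m e"

definition rinv :: "'a set \<Rightarrow> ('a \<Rightarrow> 'a \<Rightarrow> 'a) \<Rightarrow> 'a \<Rightarrow> 'a \<Rightarrow> 'a" where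
  "rinv G m e x = (THE y. y \<in> G \<and> m x y = e)"

end

theory Submission
  imports Defs
begin

theorem theorem3p1:
  fixes G H :: "'a set" and m :: "'a \<Rightarrow> 'a \<Rightarrow> 'a" and e :: 'a
  assumes "loop G m e"
    and "subloop H G m e"
    and "H \<noteq> {e}"
    and "\<forall>x\<in>G. \<forall>z\<in>G. \<forall>s\<in>H. m (m (m x s) z) s = m x (m (m s z) s)"
  shows "(\<forall>x\<in>G. \<forall>s\<in>H. m (m x s) (rinv G m e s) = x) \<and>
         (\<forall>x\<in>G. \<forall>s\<in>H. m x (m s s) = m (m x s) s)"
proof -
  have eG: "e \<in> G" and cl: "\<And>x y. x \<in> G \<Longrightarrow> y \<in> G \<Longrightarrow> m x y \<in> G"
    and id1: "\<And>x. x \<in> G \<Longrightarrow> m e x = x" and id2: "\<And>x. x \<in> G \<Longrightarrow> m x e = x"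
    and ls: "\<And>a b. a \<in> G \<Longrightarrow> b \<in> G \<Longrightarrow> \<exists>!x. x \<in> G \<and> m a x = b"
    and rs: "\<And>a b. a \<in> G \<Longrightarrow> b \<in> G \<Longrightarrow> \<exists>!y. y \<in> G \<and> m y a = b"
    using assms(1) unfolding loop_def by auto
  have HG: "H \<subseteq> G" using assms(2) unfolding subloop_def by auto
  have A: "\<And>x z s. x \<in> G \<Longrightarrow> z \<in> G \<Longrightarrow> s \<in> H \<Longrightarrow> m (m (m x s) z) s = m x (m (m s z) s)"
    using assms(4) by blast
  have part1: "\<forall>x\<in>G. \<forall>s\<in>H. m (m x s) (rinv G m e s) = x"
  proof (intro ballI)
    fix x s assume x: "x \<in> G" and s: "s \<in> H"
    have sG: "s \<in> G" using s HG by auto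
    have r: "rinv G m e s \<in> G \<and> m s (rinv G m e s) = e"
      unfolding rinv_def using theI'[OF ls[OF sG eG]] .
    have eq: "m (m (m x s) (rinv G m e s)) s = m x s"
      using A[OF x _ s, of "rinv G m e s"] r id1[OF sG] by simp
    have g: "m (m x s) (rinv G m e s) \<in> G" using cl x sG r by auto
    show "m (m x s) (rinv G m e s) = x"
      using rs[OF sG cl[OF x sG]] eq g x by blast
  qed
  have part2: "\<forall>x\<in>G. \<forall>s\<in>H. m x (m s s) = m (m x s) s"
  proof (intro ballI)
    fix x s assume x: "x \<in> G" and s: "s \<in> H"
    have sG: "s \<in> G" using s HG by auto
    show "m x (m s s) = m (m x s) s"
      using A[OF x eG s] id2[OF sG] id2[OF cl[OF x sG]] by simp
  qed
  show ?thesis using part1 part2 by blast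
qed

end
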